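(* Let $k\ge3$ be an integer, $p>k+1$ a prime, and $l$ a positive integer with $(k+1)\nmid l$. Then the tuple $(1,2,\ldots,k)$, viewed as an element of $\mathbb{Z}_{p,l}^k$, is $(k,p,l)$-improper. Consequently, if $p>k+1$ and $I(k,p,l)=\emptyset$, then $(k+1)\mid l$.
   Context: For $x\in\mathbb{R}$, $\lVert x\rVert$ is the distance from $x$ to the nearest integer. $\mathbb{Z}_n$ denotes integers modulo $n$; $\mathbb{Z}_{p,l}:=\mathbb{Z}_{pl}\setminus p\mathbb{Z}_l$ (residues mod $pl$ not divisible by $p$). A tuple $\mathbf v\in\mathbb{Z}_{p,l}^k$ is $(k,p,l)$-proper if either there is an index $i$ with $\gcd(l,v_1,\ldots,v_{i-1},v_{i+1},\ldots,v_k)>1$, or there is $t\in\frac1{lp}\mathbb{Z}$ with $\lVert tv_j\rVert\ge\frac1{k+1}$ for all $j$; otherwise it is $(k,p,l)$-improper, and $I(k,p,l)$ is the set of improper tuples. *)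

theory Defs
  imports Complex_Main "HOL-Computational_Algebra.Primes"
begin

definition dist_int :: "real \<Rightarrow> real" where
  "dist_int x = \<bar>x - of_int (round x)\<bar>"

text \<open>Z_{p,l}: residues mod p*l (represented by 0..pl-1) not divisible by p.\<close>
definition Zpl :: "nat \<Rightarrow> nat \<Rightarrow> int set" where
  "Zpl p l = {a. 0 \<le> a \<and> a < int p * int l \<and> \<not> int p dvd a}"

text \<open>Tuples in Z_{p,l}^k are lists of length k (0-indexed).\<close>
definition proper :: "nat \<Rightarrow> nat \<Rightarrow> nat \<Rightarrow> int list \<Rightarrow> bool" where
  "proper k p l v \<longleftrightarrow>
     (\<exists>i<k. Gcd (insert (int l) {v ! j | j. j < k \<and> j \<noteq> i}) > 1) \<or>
     (\<exists>a::int. \<forall>j<k.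
        dist_int ((of_int a / (real l * real p)) * of_int (v ! j)) \<ge> 1 / (real k + 1))"

definition improper_set :: "nat \<Rightarrow> nat \<Rightarrow> nat \<Rightarrow> int list set" where
  "improper_set k p l = {v. length v = k \<and> set v \<subseteq> Zpl p l \<and> \<not> proper k p l v}"

end

theory Submission
  imports Defs
begin

lemma dist_bound:
  fixes x N :: int and c :: real
  assumes N: "N > 0" and d: "dist_int (of_int x / of_int N) \<ge> c"
  shows "of_int (x mod N) / of_int N \<ge> c \<and> of_int (N - x mod N) / of_int N \<ge> c"
proof -
  define q where "q = x div N"
  define r where "r = x mod N"
  have x: "x = q * N + r" unfolding q_def r_def by simp
  have e: "of_int x / of_int N = (of_int q :: real) + of_int r / of_int N"
    using N by (simp add: x field_simps)
  have r0: "0 \<le> r" "r < N" using N unfolding r_def by auto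
  have "dist_int (of_int x / of_int N) \<le> \<bar>of_int x / of_int N - of_int q\<bar>"
    unfolding dist_int_def by (rule round_diff_minimal)
  also have "\<dots> = of_int r / of_int N" using e r0 N by simp
  finally have 1: "c \<le> of_int r / of_int N" using d by simp
  have "dist_int (of_int x / of_int N) \<le> \<bar>of_int x / of_int N - of_int (q+1)\<bar>"
    unfolding dist_int_def by (rule round_diff_minimal)
  also have "\<dots> = of_int (N - r) / of_int N" using e r0 N by (simp add: field_simps)
  finally have 2: "c \<le> of_int (N - r) / of_int N" using d by simp
  show ?thesis using 1 2 unfolding r_def by simp
qed

lemma bucket:
  fixes K N a :: int
  assumes K: "K \<ge> 1" and N: "N > 0"
  and H: "\<And>j. 1 \<le> j \<Longrightarrow> j \<le> K \<Longrightarrow> (K+1) * ((a*j) mod N) \<ge> N \<and> (K+1) * (N - (a*j) mod N) \<ge> N"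
  shows "N dvd (K+1)*a"
proof -
  define r where "r j = (a*j) mod N" for j
  have r0: "r 0 = 0" unfolding r_def by simp
  have rb: "0 \<le> r j" "r j < N" for j unfolding r_def using N by auto
  have Hr: "(K+1) * r j \<ge> N" "(K+1) * (N - r j) \<ge> N" if "1 \<le> j" "j \<le> K" for j
    using H[OF that] unfolding r_def by auto
  have pair: "(K+1)*(r j - r i) \<ge> N"
    if ij: "i \<in> {0..K}" "j \<in> {0..K}" "i \<noteq> j" "r i \<le> r j" for i j
  proof (cases "i < j")
    case True
    define d where "d = j - i"
    have "r d = (r j - r i) mod N" unfolding r_def d_def
      by (simp add: mod_diff_eq right_diff_distrib)
    also have "\<dots> = r j - r i" using rb[of j] rb[of i] ij(4) by simp
    finally show ?thesis using Hr(1)[of d] True ij unfolding d_def by auto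
  next
    case False
    define d where "d = i - j"
    have dd: "1 \<le> d" "d \<le> K" using False ij unfolding d_def by auto
    have rd: "r d = (r i - r j) mod N" unfolding r_def d_def
      by (simp add: mod_diff_eq right_diff_distrib)
    show ?thesis
    proof (cases "r i = r j")
      case True
      then have "r d = 0" using rd by simp
      then show ?thesis using Hr(1)[OF dd] N by simp
    next
      case False
      then have "r i - r j < 0" using ij(4) by simp
      then have "(r i - r j) mod N = r i - r j + N"
        using rb[of i] rb[of j]
        by (smt (verit) mod_add_self2 mod_pos_pos_trivial)
      then have "N - r d = r j - r i" using rd by simp
      then show ?thesis using Hr(2)[OF dd] by simp
    qed
  qed
  define b where "b j = ((K+1) * r j) div N" for j
  have bl: "N * b j \<le> (K+1) * r j" "(K+1) * r j < N * b j + N" for j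
  proof -
    have "(K+1) * r j = N * b j + ((K+1) * r j) mod N" unfolding b_def by simp
    moreover have "0 \<le> ((K+1) * r j) mod N" "((K+1) * r j) mod N < N" using N by auto
    ultimately show "N * b j \<le> (K+1) * r j" "(K+1) * r j < N * b j + N" by linarith+
  qed
  have brange: "b j \<in> {0..K}" for j
  proof -
    have "0 \<le> (K+1) * r j" using rb K by simp
    have "(K+1) * r j < (K+1) * N" using rb K by simp
    have "N * b j < N * (K+1)" using bl(1)[of j] \<open>(K+1) * r j < (K+1) * N\<close> by (simp add: mult.commute)
    then have "b j < K+1" using N by simp
    moreover have "N * b j > -N" using bl[of j] \<open>0 \<le> (K+1) * r j\<close> by linarith
    then have "b j > -1" using N
      by (metis mult.commute mult_less_cancel_left_pos mult_minus1_right)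
    ultimately show ?thesis by simp
  qed
  have inj: "inj_on b {0..K}"
  proof (rule inj_onI, rule ccontr)
    fix i j assume ij: "i \<in> {0..K}" "j \<in> {0..K}" "b i = b j" "i \<noteq> j"
    show False
    proof (cases "r i \<le> r j")
      case True
      have "(K+1)*(r j - r i) < N" using bl[of i] bl[of j] ij(3) by (simp add: algebra_simps)
      then show False using pair[OF ij(1,2,4) True] by simp
    next
      case False
      have "(K+1)*(r i - r j) < N" using bl[of i] bl[of j] ij(3) by (simp add: algebra_simps)
      then show False using pair[OF ij(2,1) _] ij(4) False by simp
    qed
  qed
  have surj: "b ` {0..K} = {0..K}"
    by (rule endo_inj_surj) (use brange inj in auto)
  have b0: "b 0 = 0" unfolding b_def r0 by simp
  have claim: "\<forall>c. c = K - int n \<longrightarrow> c \<ge> 0 \<longrightarrow> (\<forall>j\<in>{0..K}. b j = c \<longrightarrow> (K+1) * r j \<le> c * N)" for n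
  proof (induction n)
    case 0
    show ?case
    proof (intro allI impI ballI)
      fix c j assume c: "c = K - int 0" and j: "j \<in> {0..K}" "b j = c"
      have "j \<noteq> 0" using b0 c j K by auto
      then have "(K+1) * (N - r j) \<ge> N" using Hr(2)[of j] j by auto
      then show "(K+1) * r j \<le> c * N" using c by (simp add: algebra_simps)
    qed
  next
    case (Suc n)
    show ?case
    proof (intro allI impI ballI)
      fix c j assume c: "c = K - int (Suc n)" "c \<ge> 0" and j: "j \<in> {0..K}" "b j = c"
      have "c + 1 \<in> {0..K}" using c by auto
      then obtain j' where j': "j' \<in> {0..K}" "b j' = c + 1" using surj by force
      have IH: "(K+1) * r j' \<le> (c+1) * N" using Suc.IH c j' by auto
      have lt: "(K+1) * r j < (K+1) * r j'" using bl[of j] bl[of j'] j j'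
        by (simp add: algebra_simps)
      then have "r j \<le> r j'" using K by simp
      moreover have "j \<noteq> j'" using j j' by auto
      ultimately have "(K+1)*(r j' - r j) \<ge> N" using pair j j' by blast
      then show "(K+1) * r j \<le> c * N" using IH by (simp add: algebra_simps)
    qed
  qed
  have "1 \<in> {0..K}" using K by simp
  have "b 1 \<in> {0..K}" by (rule brange)
  then have "(K+1) * r 1 \<le> b 1 * N" using claim[of "nat (K - b 1)"] \<open>1 \<in> {0..K}\<close> by auto
  then have "(K+1) * r 1 = N * b 1" using bl[of 1] by (simp add: mult.commute)
  then have "N dvd (K+1) * r 1" by simp
  moreover have "((K+1) * r 1) mod N = ((K+1) * a) mod N" unfolding r_def
    by (simp add: mod_mult_right_eq)
  ultimately show ?thesis by (simp add: mod_eq_0_iff_dvd[symmetric])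
qed


lemma order_dvd:
  fixes K N a :: int
  assumes K: "K \<ge> 1" and N: "N > 0"
  and H: "\<And>j. 1 \<le> j \<Longrightarrow> j \<le> K \<Longrightarrow> (K+1) * ((a*j) mod N) \<ge> N \<and> (K+1) * (N - (a*j) mod N) \<ge> N"
  shows "(K+1) dvd N"
proof -
  have dv: "N dvd (K+1)*a" by (rule bucket[OF K N H])
  define g where "g = gcd a N"
  have g0: "g > 0" using N unfolding g_def by simp
  define d where "d = N div g"
  define a' where "a' = a div g"
  have Nd: "N = g * d" unfolding d_def g_def by simp
  have aa: "a = g * a'" unfolding a'_def g_def by simp
  have cop: "coprime d a'" unfolding d_def a'_def g_def
    by (metis N div_gcd_coprime gcd.commute less_irrefl)
  have "g * d dvd g * ((K+1) * a')" using dv Nd aa by (simp add: algebra_simps)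
  then have "d dvd (K+1) * a'" using g0 by simp
  then have dK: "d dvd K+1" using cop by (simp add: coprime_dvd_mult_left_iff)
  have d0: "d > 0" using Nd N g0 by (simp add: zero_less_mult_iff)
  have "d \<ge> K+1"
  proof (rule ccontr)
    assume "\<not> d \<ge> K+1"
    then have "1 \<le> d" "d \<le> K" using d0 by auto
    from H[OF this] have "(K+1) * ((a*d) mod N) \<ge> N" by simp
    moreover have "a * d = a' * N" using Nd aa by simp
    ultimately show False using N by simp
  qed
  moreover have "d \<le> K+1" using dK K by (simp add: zdvd_imp_le)
  ultimately have "d = K+1" by simp
  then show ?thesis using Nd by simp
qed

theorem mainTheorem7:
  fixes k p l :: nat
  assumes "k \<ge> 3" and "prime p" and "p > k + 1" and "l > 0"
  shows "(\<not> (k + 1) dvd l \<longrightarrow> map int [1..<k+1] \<in> improper_set k p l) \<and>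
         (improper_set k p l = {} \<longrightarrow> (k + 1) dvd l)"
proof -
  define v where "v = map int [1..<k+1]"
  have vj: "v ! j = int j + 1" if "j < k" for j
  proof -
    have "[1..<k+1] ! j = 1 + j" using that by (simp only: nth_upt)
    then show ?thesis using that unfolding v_def by (simp del: upt_Suc)
  qed
  have len: "length v = k" unfolding v_def by simp
  have setv: "set v \<subseteq> Zpl p l"
  proof
    fix x assume "x \<in> set v"
    then obtain j where j: "j \<in> {1..<k+1}" "x = int j" unfolding v_def by auto
    have "j < p" using j assms by simp
    moreover have "p \<le> p * l" using assms by simp
    ultimately have "int j < int p * int l" by (metis of_nat_less_iff of_nat_mult order_less_le_trans)
    moreover have "\<not> int p dvd int j" using j \<open>j < p\<close>
      by (metis One_nat_def atLeastLessThan_iff int_dvd_int_iff nat_dvd_not_less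
          less_le_trans zero_less_one)
    ultimately show "x \<in> Zpl p l" unfolding Zpl_def using j by simp
  qed
  have nogcd: "\<not> (\<exists>i<k. Gcd (insert (int l) {v ! j | j. j < k \<and> j \<noteq> i}) > 1)"
  proof
    assume "\<exists>i<k. Gcd (insert (int l) {v ! j | j. j < k \<and> j \<noteq> i}) > 1"
    then obtain i where i: "i < k" "Gcd (insert (int l) {v ! j | j. j < k \<and> j \<noteq> i}) > 1" by blast
    define G where "G = Gcd (insert (int l) {v ! j | j. j < k \<and> j \<noteq> i})"
    have Gd: "G dvd v ! j" if "j < k" "j \<noteq> i" for j
      unfolding G_def by (rule Gcd_dvd) (use that in blast)
    have "G dvd 1"
    proof (cases "i = 0")
      case True
      have "G dvd 2" using Gd[of 1] vj[of 1] True assms by simp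
      moreover have "G dvd 3" using Gd[of 2] vj[of 2] True assms by simp
      ultimately have "G dvd (3 - 2)" by (rule dvd_diff[rotated])
      then show ?thesis by simp
    next
      case False
      then show ?thesis using Gd[of 0] vj[of 0] assms by simp
    qed
    then have "G \<le> 1" by (simp add: zdvd_imp_le)
    then show False using i unfolding G_def by simp
  qed
  have part1: "map int [1..<k+1] \<in> improper_set k p l" if nd: "\<not> (k + 1) dvd l"
  proof -
    have "\<not> proper k p l v"
    proof
      assume "proper k p l v"
      then obtain a :: int where a: "\<forall>j<k. dist_int ((of_int a / (real l * real p)) * of_int (v ! j)) \<ge> 1 / (real k + 1)"
        using nogcd unfolding proper_def by blast
      define N where "N = int l * int p"
      have N0: "N > 0" unfolding N_def using assms prime_gt_0_nat by simp
      have H: "(int k+1) * ((a*j) mod N) \<ge> N \<and> (int k+1) * (N - (a*j) mod N) \<ge> N"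
        if j: "1 \<le> j" "j \<le> int k" for j
      proof -
        have jj: "nat j - 1 < k" "v ! (nat j - 1) = j" using j vj[of "nat j - 1"] by auto
        have "(of_int a / (real l * real p)) * of_int (v ! (nat j - 1)) = of_int (a*j) / of_int N"
          unfolding N_def jj(2) by simp
        then have "dist_int (of_int (a*j) / of_int N) \<ge> 1 / (real k + 1)" using a jj(1) by metis
        from dist_bound[OF N0 this] have
          b1: "of_int ((a*j) mod N) / of_int N \<ge> 1 / (real k + 1)" and
          b2: "of_int (N - (a*j) mod N) / of_int N \<ge> 1 / (real k + 1)" by auto
        have Np: "(of_int N :: real) > 0" using N0 by simp
        from b1 have "real_of_int N \<le> (real k + 1) * of_int ((a*j) mod N)"
          using Np by (simp add: field_simps)
        then have c1: "N \<le> (int k+1) * ((a*j) mod N)"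
          by (metis (mono_tags, opaque_lifting) of_int_le_iff of_int_mult of_int_of_nat_eq of_int_1 of_int_add)
        from b2 have "real_of_int N \<le> (real k + 1) * of_int (N - (a*j) mod N)"
          using Np by (simp add: field_simps)
        then have c2: "N \<le> (int k+1) * (N - (a*j) mod N)"
          by (metis (mono_tags, opaque_lifting) of_int_le_iff of_int_mult of_int_of_nat_eq of_int_1 of_int_add)
        show ?thesis using c1 c2 by simp
      qed
      have "(int k + 1) dvd N" by (rule order_dvd[OF _ N0 H]) (use assms in auto)
      then have "int (k+1) dvd int (l * p)" unfolding N_def by (simp add: add.commute)
      then have kd: "(k+1) dvd l * p" by (simp only: of_nat_dvd_iff)
      have "\<not> p dvd (k+1)" using assms by (simp add: nat_dvd_not_less)
      then have "coprime p (k+1)" using assms(2) by (simp add: prime_imp_coprime)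
      then have "coprime (k+1) p" by (simp add: coprime_commute)
      then have "(k+1) dvd l" using kd by (simp add: coprime_dvd_mult_left_iff)
      then show False using nd by simp
    qed
    then show ?thesis using len setv unfolding improper_set_def v_def by simp
  qed
  show ?thesis using part1 by auto
qed

end
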